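(* Let $(X,d,\kappa)$ be a digital metric space, where $d$ is any $\ell_p$ metric, and let $f,g: X \to X$. Then $f$ is $g$-intimate if and only if for every sequence $\{x_n\}_{n=1}^\infty \subset X$ such that $\lim_{n\to\infty} f(x_n) = \lim_{n\to\infty} g(x_n) = t$ for some $t \in X$, we have, for $n$ sufficiently large, $d(g(t),t) \le d(f(t),t)$.
   Context: A digital metric space is a triple $(X,d,\kappa)$ with $X\subset\mathbb{Z}^n$, $\kappa$ an adjacency relation on $X$, and $d$ a metric on $X$. The $\ell_p$ metric ($1\le p\le\infty$) is $d(x,y) = (\sum_i |x_i-y_i|^p)^{1/p}$ for $p<\infty$ and $\max_i|x_i-y_i|$ for $p=\infty$. Limits are taken with respect to $d$. Let $\alpha$ denote either the $\liminf_{n\to\infty}$ or the $\limsup_{n\to\infty}$ operation. For $f,g: X\to X$, $f$ is $g$-intimate if for every sequence $\{x_n\} \subset X$ with $\lim_{n\to\infty} f(x_n) = \lim_{n\to\infty} g(x_n) = t$ for some $t\in X$ we have (in the paper's wording, "for $n$ sufficiently large") $\alpha\, d(g(f(x_n)), g(x_n)) \le \alpha\, d(f(f(x_n)), f(x_n))$. *)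

theory Defs
  imports "HOL-Analysis.Analysis"
begin

definition lp_dist :: "ereal \<Rightarrow> int ^ 'n \<Rightarrow> int ^ 'n \<Rightarrow> real" where
  "lp_dist p x y =
     (if p = \<infinity> then Max (range (\<lambda>i. real_of_int \<bar>x $ i - y $ i\<bar>))
      else (\<Sum>i\<in>UNIV. real_of_int \<bar>x $ i - y $ i\<bar> powr real_of_ereal p)
             powr (1 / real_of_ereal p))"

definition conv_wrt :: "('a \<Rightarrow> 'a \<Rightarrow> real) \<Rightarrow> (nat \<Rightarrow> 'a) \<Rightarrow> 'a \<Rightarrow> bool" where
  "conv_wrt d s t \<longleftrightarrow> (\<forall>e>0. \<exists>N. \<forall>n\<ge>N. d (s n) t < e)"

definition alpha_op :: "bool \<Rightarrow> (nat \<Rightarrow> real) \<Rightarrow> ereal" where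
  "alpha_op use_liminf u =
     (if use_liminf then liminf (\<lambda>n. ereal (u n)) else limsup (\<lambda>n. ereal (u n)))"

definition g_intimate ::
  "bool \<Rightarrow> ('a \<Rightarrow> 'a \<Rightarrow> real) \<Rightarrow> 'a set \<Rightarrow> ('a \<Rightarrow> 'a) \<Rightarrow> ('a \<Rightarrow> 'a) \<Rightarrow> bool" where
  "g_intimate use_liminf d X f g \<longleftrightarrow>
     (\<forall>s t. (\<forall>n. s n \<in> X) \<and> t \<in> X \<and>
            conv_wrt d (\<lambda>n. f (s n)) t \<and> conv_wrt d (\<lambda>n. g (s n)) t \<longrightarrow>
            alpha_op use_liminf (\<lambda>n. d (g (f (s n))) (g (s n)))
              \<le> alpha_op use_liminf (\<lambda>n. d (f (f (s n))) (f (s n))))"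

end

theory Submission
  imports Defs
begin

lemma lp_small_eq:
  fixes x y :: "int ^ 'n"
  assumes p: "p \<ge> 1" and d: "lp_dist p x y < 1"
  shows "x = y"
proof (rule ccontr)
  assume "x \<noteq> y"
  then obtain i where i: "x $ i \<noteq> y $ i" by (metis vec_eq_iff)
  hence one: "real_of_int \<bar>x $ i - y $ i\<bar> \<ge> 1" by linarith
  show False
  proof (cases "p = \<infinity>")
    case True
    have "real_of_int \<bar>x $ i - y $ i\<bar> \<le> Max (range (\<lambda>i. real_of_int \<bar>x $ i - y $ i\<bar>))"
      by (rule Max_ge) auto
    with True d one show False unfolding lp_dist_def by (simp del: of_int_abs of_int_diff)
  next
    case False
    define q where "q = real_of_ereal p"
    have pq: "p = ereal q" using p False unfolding q_def by (cases p) auto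
    have q1: "q \<ge> 1" using p pq by simp
    have "1 \<le> real_of_int \<bar>x $ i - y $ i\<bar> powr q"
      using one q1 by (simp add: ge_one_powr_ge_zero)
    also have "\<dots> \<le> (\<Sum>j\<in>UNIV. real_of_int \<bar>x $ j - y $ j\<bar> powr q)"
      by (rule member_le_sum) auto
    finally have S: "1 \<le> (\<Sum>j\<in>UNIV. real_of_int \<bar>x $ j - y $ j\<bar> powr q)" .
    have "1 \<le> (\<Sum>j\<in>UNIV. real_of_int \<bar>x $ j - y $ j\<bar> powr q) powr (1 / q)"
      using S q1 by (simp add: ge_one_powr_ge_zero)
    with d False show False unfolding lp_dist_def q_def[symmetric] by simp
  qed
qed

lemma conv_ev:
  assumes p: "p \<ge> 1" and c: "conv_wrt (lp_dist p) s t"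
  shows "\<forall>\<^sub>F n in sequentially. s n = t"
proof -
  from c obtain N where "\<forall>n\<ge>N. lp_dist p (s n) t < 1" unfolding conv_wrt_def
    by (meson zero_less_one)
  thus ?thesis using lp_small_eq[OF p] unfolding eventually_sequentially by blast
qed

lemma alpha_ev:
  assumes "\<forall>\<^sub>F n in sequentially. u n = c"
  shows "alpha_op b u = ereal c"
proof -
  have "((\<lambda>n. ereal (u n)) \<longlongrightarrow> ereal c) sequentially"
    by (rule tendsto_eventually) (use assms in \<open>auto elim: eventually_mono\<close>)
  thus ?thesis unfolding alpha_op_def
    using lim_imp_Liminf lim_imp_Limsup by (simp add: lim_imp_Liminf lim_imp_Limsup)
qed

theorem mainTheorem10:
  fixes X :: "(int ^ 'n) set" and kappa :: "int ^ 'n \<Rightarrow> int ^ 'n \<Rightarrow> bool"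
    and p :: ereal and f g :: "int ^ 'n \<Rightarrow> int ^ 'n" and use_liminf :: bool
  assumes "p \<ge> 1"
    and "f ` X \<subseteq> X" and "g ` X \<subseteq> X"
  shows "g_intimate use_liminf (lp_dist p) X f g \<longleftrightarrow>
    (\<forall>s t. (\<forall>n. s n \<in> X) \<and> t \<in> X \<and>
           conv_wrt (lp_dist p) (\<lambda>n. f (s n)) t \<and> conv_wrt (lp_dist p) (\<lambda>n. g (s n)) t \<longrightarrow>
           (\<forall>\<^sub>F n in sequentially. lp_dist p (g t) t \<le> lp_dist p (f t) t))"
proof -
  have key: "alpha_op use_liminf (\<lambda>n. lp_dist p (g (f (s n))) (g (s n)))
              \<le> alpha_op use_liminf (\<lambda>n. lp_dist p (f (f (s n))) (f (s n)))
     \<longleftrightarrow> (\<forall>\<^sub>F n in sequentially. lp_dist p (g t) t \<le> lp_dist p (f t) t)"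
    if cf: "conv_wrt (lp_dist p) (\<lambda>n. f (s n)) t" and cg: "conv_wrt (lp_dist p) (\<lambda>n. g (s n)) t"
    for s t
  proof -
    have ef: "\<forall>\<^sub>F n in sequentially. f (s n) = t" by (rule conv_ev[OF assms(1) cf])
    have eg: "\<forall>\<^sub>F n in sequentially. g (s n) = t" by (rule conv_ev[OF assms(1) cg])
    have a1: "alpha_op use_liminf (\<lambda>n. lp_dist p (g (f (s n))) (g (s n))) = ereal (lp_dist p (g t) t)"
      by (rule alpha_ev) (use eventually_conj[OF ef eg] in \<open>auto elim: eventually_mono\<close>)
    have a2: "alpha_op use_liminf (\<lambda>n. lp_dist p (f (f (s n))) (f (s n))) = ereal (lp_dist p (f t) t)"
      by (rule alpha_ev) (use ef in \<open>auto elim: eventually_mono\<close>)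
    show ?thesis unfolding a1 a2 by simp
  qed
  show ?thesis unfolding g_intimate_def using key by blast
qed

end
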